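(* Let $n\ge 2$, and let $S$ be a semitransitive subsemigroup of $\mathcal{I}_n\setminus\mathcal{S}_n$ with $|S|\le 2n$, with transitivity blocks $X_1,\dots,X_m$. For any $x,y$ belonging to the same transitivity block there is $\alpha\in S$ which has an arrow $x\to y$ and has no arrow from $X_p$ to $X_q$ with $p\neq q$.
   Context: $\mathcal{I}_n$ denotes the symmetric inverse semigroup of all partial injective maps of $X=\{1,\dots,n\}$ to itself (including the empty map $0$), with maps written on the right and composed left to right. $\mathcal{S}_n$ is the symmetric group on $X$. A semigroup $S$ of partial transformations of $X$ is semitransitive if for all $x,y\in X$ there is $\varphi\in S$ with $x\varphi=y$ or $y\varphi=x$. For $x,y\in X$ write $x\ge y$ if $x\varphi=y$ for some $\varphi\in S$; for semitransitive $S$ this is a total preorder. The transitivity blocks $X_1,\dots,X_m$ are the equivalence classes of this preorder (i.e. $x,y$ in the same block iff $x\ge y$ and $y\ge x$), numbered so that for $x\in X_i$, $y\in X_j$ one has $x\ge y$ iff $i\le j$. An element $\alpha\in S$ has an arrow $x\to y$ if $x\in\mathrm{dom}(\alpha)$ and $x\alpha=y$; the arrow is from block $X_p$ to block $X_q$ if $x\in X_p$, $y\in X_q$. *)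

theory Defs
  imports Main
begin

text \<open>Partial maps of X = {1..n} are modelled as maps nat \<rightharpoonup> nat.
  Maps are written on the right and composed left to right:
  x (alpha beta) = (x alpha) beta, i.e. alpha then beta.\<close>

definition pcomp :: "(nat \<rightharpoonup> nat) \<Rightarrow> (nat \<rightharpoonup> nat) \<Rightarrow> (nat \<rightharpoonup> nat)" where
  "pcomp \<alpha> \<beta> = \<beta> \<circ>\<^sub>m \<alpha>"

definition sym_inv :: "nat \<Rightarrow> (nat \<rightharpoonup> nat) set" where
  "sym_inv n = {\<alpha>. dom \<alpha> \<subseteq> {1..n} \<and> ran \<alpha> \<subseteq> {1..n} \<and> inj_on \<alpha> (dom \<alpha>)}"

definition sym_grp :: "nat \<Rightarrow> (nat \<rightharpoonup> nat) set" where
  "sym_grp n = {\<alpha>. \<alpha> \<in> sym_inv n \<and> dom \<alpha> = {1..n} \<and> ran \<alpha> = {1..n}}"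

definition subsemigroup :: "(nat \<rightharpoonup> nat) set \<Rightarrow> bool" where
  "subsemigroup S \<longleftrightarrow> (\<forall>\<alpha>\<in>S. \<forall>\<beta>\<in>S. pcomp \<alpha> \<beta> \<in> S)"

definition semitransitive :: "nat \<Rightarrow> (nat \<rightharpoonup> nat) set \<Rightarrow> bool" where
  "semitransitive n S \<longleftrightarrow>
     (\<forall>x\<in>{1..n}. \<forall>y\<in>{1..n}. \<exists>\<phi>\<in>S. \<phi> x = Some y \<or> \<phi> y = Some x)"

definition reach :: "(nat \<rightharpoonup> nat) set \<Rightarrow> nat \<Rightarrow> nat \<Rightarrow> bool" where
  "reach S x y \<longleftrightarrow> (\<exists>\<phi>\<in>S. \<phi> x = Some y)"

definition same_block :: "(nat \<rightharpoonup> nat) set \<Rightarrow> nat \<Rightarrow> nat \<Rightarrow> bool" where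
  "same_block S x y \<longleftrightarrow> reach S x y \<and> reach S y x"

end

theory Submission
  imports Defs
begin

fun iter :: "(nat \<rightharpoonup> nat) \<Rightarrow> nat \<Rightarrow> nat \<Rightarrow> nat option" where
  "iter \<psi> 0 u = Some u"
| "iter \<psi> (Suc k) u = Option.bind (iter \<psi> k u) \<psi>"

fun pw :: "(nat \<rightharpoonup> nat) \<Rightarrow> nat \<Rightarrow> (nat \<rightharpoonup> nat)" where
  "pw \<psi> 0 = \<psi>"
| "pw \<psi> (Suc k) = pcomp (pw \<psi> k) \<psi>"

lemma mc_bind: "(f \<circ>\<^sub>m g) u = Option.bind (g u) f"
  by (cases "g u") auto

lemma pw_iter: "pw \<psi> k u = iter \<psi> (Suc k) u"
  by (induction k arbitrary: u) (simp_all add: pcomp_def mc_bind)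

lemma pw_in: "subsemigroup S \<Longrightarrow> \<psi> \<in> S \<Longrightarrow> pw \<psi> k \<in> S"
  by (induction k) (auto simp: subsemigroup_def)

lemma iter_add: "iter \<psi> (a + b) u = Option.bind (iter \<psi> a u) (iter \<psi> b)"
  by (induction b) (auto simp: bind_assoc)

lemma iter_fix: "\<psi> x = Some x \<Longrightarrow> iter \<psi> k x = Some x"
  by (induction k) auto

lemma iter_defined: "iter \<psi> k u = Some w \<Longrightarrow> i \<le> k \<Longrightarrow> \<exists>z. iter \<psi> i u = Some z"
proof (induction k arbitrary: w)
  case 0 then show ?case by auto
next
  case (Suc k)
  show ?case
  proof (cases "i = Suc k")
    case True then show ?thesis using Suc by auto
  next
    case False
    from Suc.prems(1) obtain z where "iter \<psi> k u = Some z" by (cases "iter \<psi> k u") auto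
    then show ?thesis using Suc False by auto
  qed
qed

lemma iter_range:
  assumes "\<psi> \<in> sym_inv n" "u \<in> {1..n}" "iter \<psi> k u = Some z"
  shows "z \<in> {1..n}"
proof (cases k)
  case 0 then show ?thesis using assms by auto
next
  case (Suc j)
  then obtain a where "\<psi> a = Some z" using assms(3) by (cases "iter \<psi> j u") auto
  then have "z \<in> ran \<psi>" by (auto simp: ran_def)
  then show ?thesis using assms(1) by (auto simp: sym_inv_def)
qed

lemma iter_cancel:
  assumes "\<psi> \<in> sym_inv n" "iter \<psi> (i + d) u = Some a" "iter \<psi> i u = Some a"
  shows "iter \<psi> d u = Some u"
  using assms(2,3)
proof (induction i arbitrary: a)
  case 0 then show ?case by auto
next
  case (Suc i)
  obtain b where b: "iter \<psi> i u = Some b" "\<psi> b = Some a"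
    using Suc.prems(2) by (cases "iter \<psi> i u") auto
  obtain c where c: "iter \<psi> (i + d) u = Some c" "\<psi> c = Some a"
    using Suc.prems(1) by (cases "iter \<psi> (i + d) u") auto
  have inj: "inj_on \<psi> (dom \<psi>)" using assms(1) by (auto simp: sym_inv_def)
  have "b \<in> dom \<psi>" "c \<in> dom \<psi>" using b(2) c(2) by auto
  then have "b = c" using inj b(2) c(2) by (metis inj_onD)
  then show ?case using Suc.IH b c by auto
qed

lemma periodic:
  assumes "\<psi> \<in> sym_inv n" "u \<in> {1..n}" "iter \<psi> n u = Some w"
  shows "\<exists>p\<ge>1. iter \<psi> p u = Some u"
proof -
  define f where "f i = the (iter \<psi> i u)" for i
  have def: "i \<le> n \<Longrightarrow> iter \<psi> i u = Some (f i)" for i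
    using iter_defined[OF assms(3)] by (auto simp: f_def)
  have "f ` {0..n} \<subseteq> {1..n}"
  proof
    fix z assume "z \<in> f ` {0..n}"
    then obtain i where "i \<le> n" "z = f i" by auto
    then show "z \<in> {1..n}" using def iter_range[OF assms(1,2)] by blast
  qed
  then have "card (f ` {0..n}) \<le> n"
    by (metis card_atLeastAtMost card_mono diff_Suc_1 finite_atLeastAtMost)
  then have "\<not> inj_on f {0..n}"
    using card_image by fastforce
  then obtain i j where ij: "i \<in> {0..n}" "j \<in> {0..n}" "i \<noteq> j" "f i = f j"
    by (auto simp: inj_on_def)
  then have "\<exists>i j. i < j \<and> j \<le> n \<and> f i = f j"
    by (metis atLeastAtMost_iff linorder_neqE_nat)
  then obtain i j where ij: "i < j" "j \<le> n" "f i = f j" by blast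
  have "iter \<psi> (i + (j - i)) u = Some (f i)" using def ij by auto
  then have "iter \<psi> (j - i) u = Some u"
    using iter_cancel[OF assms(1)] def ij by fastforce
  then show ?thesis using ij by (intro exI[of _ "j - i"]) auto
qed

lemma periodic_mult: "iter \<psi> p u = Some u \<Longrightarrow> iter \<psi> (p * t) u = Some u"
proof (induction t)
  case 0 then show ?case by auto
next
  case (Suc t)
  have "iter \<psi> (p * Suc t) u = iter \<psi> (p * t + p) u" by (simp add: add.commute)
  also have "\<dots> = Some u" using Suc iter_add[of \<psi> "p*t" p u] by auto
  finally show ?case .
qed

theorem lemma2p2:
  fixes n :: nat and S :: "(nat \<rightharpoonup> nat) set" and x y :: nat
  assumes "n \<ge> 2"
    and "S \<subseteq> sym_inv n - sym_grp n"
    and "subsemigroup S"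
    and "semitransitive n S"
    and "finite S" and "card S \<le> 2 * n"
    and "x \<in> {1..n}" and "y \<in> {1..n}"
    and "same_block S x y"
  shows "\<exists>\<alpha>\<in>S. \<alpha> x = Some y \<and>
           (\<forall>u v. \<alpha> u = Some v \<longrightarrow> same_block S u v)"
proof -
  obtain \<beta> where \<beta>: "\<beta> \<in> S" "\<beta> x = Some y"
    using assms(9) by (auto simp: same_block_def reach_def)
  obtain \<gamma> where \<gamma>: "\<gamma> \<in> S" "\<gamma> y = Some x"
    using assms(9) by (auto simp: same_block_def reach_def)
  define \<psi> where "\<psi> = pcomp \<beta> \<gamma>"
  have \<psi>S: "\<psi> \<in> S" using assms(3) \<beta> \<gamma> by (auto simp: subsemigroup_def \<psi>_def)
  have \<psi>I: "\<psi> \<in> sym_inv n" using \<psi>S assms(2) by auto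
  have \<psi>x: "\<psi> x = Some x" using \<beta> \<gamma> by (auto simp: \<psi>_def pcomp_def)
  define \<alpha> where "\<alpha> = pcomp (pw \<psi> n) \<beta>"
  have \<alpha>S: "\<alpha> \<in> S" using pw_in[OF assms(3) \<psi>S] \<beta> assms(3)
    by (auto simp: subsemigroup_def \<alpha>_def)
  have "\<alpha> x = Some y" using \<beta> iter_fix[of \<psi> x, OF \<psi>x]
    by (simp add: \<alpha>_def pcomp_def mc_bind pw_iter del: iter.simps)
  moreover have "same_block S u v" if uv: "\<alpha> u = Some v" for u v
  proof -
    obtain w where w: "iter \<psi> (Suc n) u = Some w" "\<beta> w = Some v"
      using uv by (auto simp: \<alpha>_def pcomp_def pw_iter map_comp_def split: option.splits)
    have "u \<in> dom \<psi>" using iter_defined[OF w(1), of 1] by auto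
    then have uX: "u \<in> {1..n}" using \<psi>I by (auto simp: sym_inv_def)
    obtain w' where w': "iter \<psi> n u = Some w'" using iter_defined[OF w(1), of n] by auto
    obtain p where p: "p \<ge> 1" "iter \<psi> p u = Some u" using periodic[OF \<psi>I uX w'] by auto
    define q where "q = p * (n + 3)"
    have q: "iter \<psi> q u = Some u" using periodic_mult[OF p(2)] by (simp add: q_def)
    have qge: "q \<ge> n + 3" using p(1) by (simp add: q_def)
    define j where "j = q - (n + 3)"
    define \<delta> where "\<delta> = pcomp \<gamma> (pw \<psi> j)"
    have \<delta>S: "\<delta> \<in> S" using pw_in[OF assms(3) \<psi>S] \<gamma> assms(3)
      by (auto simp: subsemigroup_def \<delta>_def)
    have "\<gamma> v = \<psi> w" using w(2) by (auto simp: \<psi>_def pcomp_def)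
    then have gv: "\<gamma> v = iter \<psi> (Suc (Suc n)) u" using w(1) by simp
    have "\<delta> v = Option.bind (iter \<psi> (Suc (Suc n)) u) (iter \<psi> (Suc j))"
      unfolding \<delta>_def pcomp_def mc_bind gv using pw_iter[of \<psi> j] by metis
    also have "\<dots> = iter \<psi> (Suc (Suc n) + Suc j) u" by (simp only: iter_add)
    also have "Suc (Suc n) + Suc j = q" using qge by (simp add: j_def)
    finally have "\<delta> v = Some u" using q by simp
    then show ?thesis using uv \<alpha>S \<delta>S by (auto simp: same_block_def reach_def)
  qed
  ultimately show ?thesis using \<alpha>S by blast
qed

end
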